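(* There is a polynomial $\mathit{pol}$, independent of $\langle\mathcal{I},\eta\rangle$ (depending only on the fixed database schema), such that if a database with integrity constraints $\langle\mathcal{I},\eta\rangle$ (in the setting described below) is consistent, then it has a possible world $V$ with $\mathit{size}(V)=O(\mathit{pol}(\mathit{size}(\mathcal{I})+\mathit{size}(\eta)))$.
   Context: Constants: $\mathit{Dom}=\{\bot,1,2,\dots\}$ with $\bot$ the null value, $\mathit{Dom}_d=\{1,2,\dots\}$ (integers written in binary/decimal); the only built-in relations are $=$ and $\le$. The set of base predicate symbols (number and arities) is fixed. $\mathit{size}(\cdot)$ is the size of the representation. Facts are ground atoms; definite facts contain no $\bot$. For tuples, $t\preceq t'$ if each $t_i=t'_i$ or $t_i=\bot$; $a\approx b$ if some $s$ has $a\preceq s,b\preceq s$. For a set $S$ of facts: $S^\Downarrow=\{a:\exists b\in S,a\preceq b\}$, $S^\Uparrow=\{a:\exists b\in S,b\preceq a\}$, $S^\approx=\{a:\exists b\in S,b\approx a\}$, $S^\sim=S^\approx\setminus S^\Downarrow$. A database is $\mathcal{I}=\langle D,E\rangle$, $D,E$ finite sets of base facts; $\mathcal{I}_t=D^\Downarrow$, $\mathcal{I}_u=D^\sim\setminus E^\Uparrow$; a possible world of $\mathcal{I}$ is a set $W$ of definite facts with $\mathcal{I}_t\subseteq W^\Downarrow$ and $W\subseteq\mathcal{I}_t\cup\mathcal{I}_u$. Integrity constraints have the form $\exists X\,\forall Y\,(A_1\wedge\dots\wedge A_k\rightarrow B_1\vee\dots\vee B_m)$, atoms without $\bot$ over base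 and built-in predicates, every variable in $X\cup Y$ and occurring in some base-predicate $A_i$. A possible world of $\langle\mathcal{I},\eta\rangle$ is a possible world of $\mathcal{I}$ satisfying every constraint of $\eta$ (as an interpretation with domain $\mathit{Dom}_d$); $\langle\mathcal{I},\eta\rangle$ is consistent if one exists. *)

theory Defs
  imports "HOL-Computational_Algebra.Polynomial"
begin

text \<open>Dom = {bot,1,2,...} is encoded as nat, with 0 playing the role of the null value bot;
  Dom_d = {1,2,...} are the positive naturals.\<close>

type_synonym val = nat

definition nullv :: val where "nullv = 0"

definition definite_val :: "val \<Rightarrow> bool" where
  "definite_val v \<longleftrightarrow> v \<noteq> nullv"

fun bitlen :: "nat \<Rightarrow> nat" where
  "bitlen n = (if n \<le> 1 then 1 else Suc (bitlen (n div 2)))"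

text \<open>A fact over predicate symbols 'p is a predicate symbol with an argument tuple.
  The schema is given by an arity function on a finite type of predicate symbols.\<close>

type_synonym 'p fact = "'p \<times> val list"

definition base_fact :: "('p \<Rightarrow> nat) \<Rightarrow> 'p fact \<Rightarrow> bool" where
  "base_fact ar f \<longleftrightarrow> length (snd f) = ar (fst f)"

definition definite_fact :: "'p fact \<Rightarrow> bool" where
  "definite_fact f \<longleftrightarrow> (\<forall>v\<in>set (snd f). definite_val v)"

definition fact_size :: "'p fact \<Rightarrow> nat" where
  "fact_size f = 1 + (\<Sum>v\<leftarrow>snd f. bitlen v)"

definition facts_size :: "'p fact set \<Rightarrow> nat" where
  "facts_size S = (\<Sum>f\<in>S. fact_size f)"

definition less_inf :: "'p fact \<Rightarrow> 'p fact \<Rightarrow> bool" where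
  "less_inf a b \<longleftrightarrow> fst a = fst b \<and> length (snd a) = length (snd b) \<and>
     (\<forall>i < length (snd a). snd a ! i = snd b ! i \<or> snd a ! i = nullv)"

definition compat :: "'p fact \<Rightarrow> 'p fact \<Rightarrow> bool" where
  "compat a b \<longleftrightarrow> (\<exists>s. less_inf a s \<and> less_inf b s)"

definition down :: "'p fact set \<Rightarrow> 'p fact set" where
  "down S = {a. \<exists>b\<in>S. less_inf a b}"

definition up :: "'p fact set \<Rightarrow> 'p fact set" where
  "up S = {a. \<exists>b\<in>S. less_inf b a}"

definition compat_set :: "'p fact set \<Rightarrow> 'p fact set" where
  "compat_set S = {a. \<exists>b\<in>S. compat b a}"

definition tilde :: "'p fact set \<Rightarrow> 'p fact set" where
  "tilde S = compat_set S - down S"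

type_synonym 'p db = "'p fact set \<times> 'p fact set"

definition wf_db :: "('p \<Rightarrow> nat) \<Rightarrow> 'p db \<Rightarrow> bool" where
  "wf_db ar I \<longleftrightarrow> finite (fst I) \<and> finite (snd I) \<and>
     (\<forall>f\<in>fst I. base_fact ar f) \<and> (\<forall>f\<in>snd I. base_fact ar f)"

definition db_size :: "'p db \<Rightarrow> nat" where
  "db_size I = facts_size (fst I) + facts_size (snd I)"

definition I_t :: "'p db \<Rightarrow> 'p fact set" where
  "I_t I = down (fst I)"

definition I_u :: "'p db \<Rightarrow> 'p fact set" where
  "I_u I = tilde (fst I) - up (snd I)"

definition possible_world :: "'p db \<Rightarrow> 'p fact set \<Rightarrow> bool" where
  "possible_world I W \<longleftrightarrow> (\<forall>f\<in>W. definite_fact f) \<and>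
     I_t I \<subseteq> down W \<and> W \<subseteq> I_t I \<union> I_u I"

datatype trm = Var nat | Const nat

datatype 'p atom = Base 'p "trm list" | Eq trm trm | Leq trm trm

text \<open>Constraint \<exists>X \<forall>Y (A_1 \<and> ... \<and> A_k \<longrightarrow> B_1 \<or> ... \<or> B_m).\<close>
datatype 'p constr = Constr (exvars: "nat list") (allvars: "nat list")
                            (body: "'p atom list") (head: "'p atom list")

fun trm_vars :: "trm \<Rightarrow> nat set" where
  "trm_vars (Var x) = {x}"
| "trm_vars (Const c) = {}"

fun trm_ok :: "trm \<Rightarrow> bool" where
  "trm_ok (Var x) = True"
| "trm_ok (Const c) = definite_val c"

fun atom_vars :: "'p atom \<Rightarrow> nat set" where
  "atom_vars (Base p ts) = (\<Union>t\<in>set ts. trm_vars t)"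
| "atom_vars (Eq s t) = trm_vars s \<union> trm_vars t"
| "atom_vars (Leq s t) = trm_vars s \<union> trm_vars t"

fun atom_wf :: "('p \<Rightarrow> nat) \<Rightarrow> 'p atom \<Rightarrow> bool" where
  "atom_wf ar (Base p ts) = (length ts = ar p \<and> (\<forall>t\<in>set ts. trm_ok t))"
| "atom_wf ar (Eq s t) = (trm_ok s \<and> trm_ok t)"
| "atom_wf ar (Leq s t) = (trm_ok s \<and> trm_ok t)"

fun is_base :: "'p atom \<Rightarrow> bool" where
  "is_base (Base p ts) = True"
| "is_base _ = False"

definition constr_wf :: "('p \<Rightarrow> nat) \<Rightarrow> 'p constr \<Rightarrow> bool" where
  "constr_wf ar c \<longleftrightarrow>
     (\<forall>a\<in>set (body c) \<union> set (head c). atom_wf ar a \<and> atom_vars a \<subseteq> set (exvars c) \<union> set (allvars c)) \<and>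
     (\<forall>x\<in>set (exvars c) \<union> set (allvars c). \<exists>a\<in>set (body c). is_base a \<and> x \<in> atom_vars a)"

fun trm_eval :: "(nat \<Rightarrow> val) \<Rightarrow> trm \<Rightarrow> val" where
  "trm_eval \<sigma> (Var x) = \<sigma> x"
| "trm_eval \<sigma> (Const c) = c"

fun atom_holds :: "'p fact set \<Rightarrow> (nat \<Rightarrow> val) \<Rightarrow> 'p atom \<Rightarrow> bool" where
  "atom_holds W \<sigma> (Base p ts) = ((p, map (trm_eval \<sigma>) ts) \<in> W)"
| "atom_holds W \<sigma> (Eq s t) = (trm_eval \<sigma> s = trm_eval \<sigma> t)"
| "atom_holds W \<sigma> (Leq s t) = (trm_eval \<sigma> s \<le> trm_eval \<sigma> t)"

text \<open>Satisfaction with domain Dom_d: variables range over definite values.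
  The universally quantified variables Y override (shadow) X.\<close>
definition satisfies :: "'p fact set \<Rightarrow> 'p constr \<Rightarrow> bool" where
  "satisfies W c \<longleftrightarrow>
     (\<exists>\<sigma>. (\<forall>x\<in>set (exvars c). definite_val (\<sigma> x)) \<and>
       (\<forall>\<tau>. (\<forall>y\<in>set (allvars c). definite_val (\<tau> y)) \<and>
             (\<forall>x. x \<notin> set (allvars c) \<longrightarrow> \<tau> x = \<sigma> x) \<longrightarrow>
             (\<forall>a\<in>set (body c). atom_holds W \<tau> a) \<longrightarrow> (\<exists>b\<in>set (head c). atom_holds W \<tau> b)))"

definition constr_size :: "'p constr \<Rightarrow> nat" where
  "constr_size c = 1 + length (exvars c) + length (allvars c) +
     (\<Sum>a\<leftarrow>body c @ head c. 1 + (case a of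
        Base p ts \<Rightarrow> (\<Sum>t\<leftarrow>ts. (case t of Var x \<Rightarrow> 1 | Const k \<Rightarrow> bitlen k))
      | Eq s t \<Rightarrow> (case s of Var x \<Rightarrow> 1 | Const k \<Rightarrow> bitlen k) + (case t of Var x \<Rightarrow> 1 | Const k \<Rightarrow> bitlen k)
      | Leq s t \<Rightarrow> (case s of Var x \<Rightarrow> 1 | Const k \<Rightarrow> bitlen k) + (case t of Var x \<Rightarrow> 1 | Const k \<Rightarrow> bitlen k)))"

definition constrs_size :: "'p constr list \<Rightarrow> nat" where
  "constrs_size \<eta> = (\<Sum>c\<leftarrow>\<eta>. constr_size c)"

definition possible_world_ic :: "'p db \<Rightarrow> 'p constr list \<Rightarrow> 'p fact set \<Rightarrow> bool" where
  "possible_world_ic I \<eta> W \<longleftrightarrow> possible_world I W \<and> (\<forall>c\<in>set \<eta>. satisfies W c)"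

definition consistent :: "'p db \<Rightarrow> 'p constr list \<Rightarrow> bool" where
  "consistent I \<eta> \<longleftrightarrow> (\<exists>W. possible_world_ic I \<eta> W)"

end

theory Submission
  imports Defs
begin


lemma bitlen_ge1: "bitlen n \<ge> 1" by (induction n rule: bitlen.induct) simp

lemma bitlen_less: "n < 2 ^ bitlen n"
proof (induction n rule: bitlen.induct)
  case (1 n)
  show ?case
  proof (cases "n \<le> 1")
    case True then show ?thesis by simp
  next
    case False
    then have "n div 2 < 2 ^ bitlen (n div 2)" using 1 by simp
    then show ?thesis using False by simp
  qed
qed

lemma bitlen_bound: "n < 2 ^ k \<Longrightarrow> k \<ge> 1 \<Longrightarrow> bitlen n \<le> k"
proof (induction n arbitrary: k rule: bitlen.induct)
  case (1 n)
  show ?case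
  proof (cases "n \<le> 1")
    case True then show ?thesis using 1 by simp
  next
    case False
    then obtain k' where k: "k = Suc k'" using 1 by (cases k) auto
    have "k' \<ge> 1" using False 1 k by (cases k') auto
    moreover have "n div 2 < 2 ^ k'" using 1(2) k by simp
    ultimately have "bitlen (n div 2) \<le> k'" using 1 False by simp
    then show ?thesis using False k by simp
  qed
qed

lemma two_n: "2 * n + 1 \<le> (2::nat) ^ (n + 1)"
proof - have "n < 2^n" by (rule less_exp) then have "2 * n + 1 \<le> 2 * 2^n" by linarith then show ?thesis by simp qed

definition mapf :: "(nat \<Rightarrow> nat) \<Rightarrow> 'p fact \<Rightarrow> 'p fact" where
  "mapf h f = (fst f, map h (snd f))"

definition vals :: "'p fact set \<Rightarrow> nat set" where
  "vals S = (\<Union>f\<in>S. set (snd f))"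

lemma less_inf_refl: "less_inf a a" by (simp add: less_inf_def)

lemma less_inf_trans: assumes "less_inf a b" "less_inf b c" shows "less_inf a c"
  unfolding less_inf_def nullv_def
proof (intro conjI allI impI)
  show "fst a = fst c" "length (snd a) = length (snd c)" using assms by (auto simp: less_inf_def)
  fix i assume i: "i < length (snd a)"
  then have "snd a!i = snd b!i \<or> snd a!i = 0" "snd b!i = snd c!i \<or> snd b!i = 0"
    using assms by (auto simp: less_inf_def nullv_def)
  then show "snd a ! i = snd c ! i \<or> snd a ! i = 0" by auto
qed

lemma definite_less_inf: assumes "definite_fact a" "less_inf a b" shows "a = b"
proof -
  have l: "length (snd a) = length (snd b)" and f: "fst a = fst b" using assms(2) by (auto simp: less_inf_def)
  have "snd a = snd b"
  proof (rule nth_equalityI)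
    show "length (snd a) = length (snd b)" by (rule l)
    fix i assume i: "i < length (snd a)"
    then have "snd a ! i \<noteq> 0" using assms(1) nth_mem unfolding definite_fact_def definite_val_def nullv_def by blast
    then show "snd a ! i = snd b ! i" using assms(2) i by (auto simp: less_inf_def nullv_def)
  qed
  then show ?thesis using f by (simp add: prod_eq_iff)
qed

lemma definite_compat: "definite_fact a \<Longrightarrow> compat b a \<Longrightarrow> less_inf b a"
  unfolding compat_def using definite_less_inf by blast

lemma less_inf_mapf:
  assumes "less_inf d f" "\<forall>v\<in>set (snd d). v \<noteq> 0 \<longrightarrow> h v = v"
  shows "less_inf d (mapf h f)"
  unfolding less_inf_def nullv_def
proof (intro conjI allI impI)
  show "fst d = fst (mapf h f)" "length (snd d) = length (snd (mapf h f))"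
    using assms(1) by (auto simp: less_inf_def mapf_def)
  fix i assume i: "i < length (snd d)"
  show "snd d ! i = snd (mapf h f) ! i \<or> snd d ! i = 0"
  proof (cases "snd d ! i = 0")
    case False
    then have "snd d ! i = snd f ! i" and l: "length (snd d) = length (snd f)"
      using assms(1) i by (auto simp: less_inf_def nullv_def)
    moreover have "h (snd d ! i) = snd d ! i" using assms(2) i False nth_mem by blast
    ultimately show ?thesis using i by (simp add: mapf_def)
  qed simp
qed

lemma less_inf_mapf_rev:
  assumes "less_inf e (mapf h f)" "\<forall>v\<in>set (snd e). v \<noteq> 0 \<longrightarrow> v \<in> K"
    "\<forall>k\<in>K. h k = k" "K \<subseteq> V0" "set (snd f) \<subseteq> V0" "inj_on h V0"
  shows "less_inf e f"
  unfolding less_inf_def nullv_def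
proof (intro conjI allI impI)
  show "fst e = fst f" "length (snd e) = length (snd f)"
    using assms(1) by (auto simp: less_inf_def mapf_def)
next
  fix i assume i: "i < length (snd e)"
  show "snd e ! i = snd f ! i \<or> snd e ! i = 0"
  proof (cases "snd e ! i = 0")
    case False
    then have K: "snd e ! i \<in> K" using assms(2) i by auto
    have l: "length (snd e) = length (snd f)" using assms(1) by (auto simp: less_inf_def mapf_def)
    have "snd e ! i = h (snd f ! i)" using assms(1) i False
      by (auto simp: less_inf_def mapf_def nullv_def)
    moreover have "h (snd e ! i) = snd e ! i" using K assms(3) by auto
    moreover have "snd f ! i \<in> V0" using assms(5) i l by auto
    ultimately have "snd e ! i = snd f ! i"
      using assms(6) K assms(4) by (metis inj_on_def subsetD)
    then show ?thesis by simp
  qed simp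
qed



definition pK :: "nat set \<Rightarrow> nat \<Rightarrow> nat" where
  "pK K v = Max (insert 0 {k\<in>K. k < v})"

definition hh :: "nat set \<Rightarrow> nat set \<Rightarrow> nat \<Rightarrow> nat" where
  "hh K V0 v = (if v \<in> K then v else pK K v + card {u \<in> V0 - K. pK K v < u \<and> u \<le> v})"

context fixes K :: "nat set" assumes fK: "finite K" begin

lemma pK_in: "pK K v \<in> insert 0 K"
proof -
  have "pK K v \<in> insert 0 {k\<in>K. k < v}" unfolding pK_def using fK by (intro Max_in) auto
  then show ?thesis by auto
qed

lemma pK_ge: "k \<in> K \<Longrightarrow> k < v \<Longrightarrow> k \<le> pK K v"
  unfolding pK_def using fK by (intro Max_ge) auto

lemma pK_less: "0 < v \<Longrightarrow> pK K v < v"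
  unfolding pK_def using fK by (subst Max_less_iff) auto

lemma pK_mono: "u \<le> v \<Longrightarrow> pK K u \<le> pK K v"
  unfolding pK_def using fK by (intro Max_mono) auto

lemma hh_le: "v \<notin> K \<Longrightarrow> 0 < v \<Longrightarrow> hh K V0 v \<le> v"
proof -
  assume v: "v \<notin> K" "0 < v"
  have "{u \<in> V0 - K. pK K v < u \<and> u \<le> v} \<subseteq> {pK K v<..v}" by auto
  then have "card {u \<in> V0 - K. pK K v < u \<and> u \<le> v} \<le> v - pK K v"
    using card_mono[of "{pK K v<..v}"] by auto
  then show ?thesis using v pK_less[of v] by (simp add: hh_def)
qed

lemma hh_gt: "finite V0 \<Longrightarrow> v \<in> V0 \<Longrightarrow> v \<notin> K \<Longrightarrow> 0 < v \<Longrightarrow> pK K v < hh K V0 v"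
proof -
  assume a: "finite V0" "v \<in> V0" "v \<notin> K" "0 < v"
  have "v \<in> {u \<in> V0 - K. pK K v < u \<and> u \<le> v}" using a pK_less[of v] by auto
  moreover have "finite {u \<in> V0 - K. pK K v < u \<and> u \<le> v}" using a by auto
  ultimately have "card {u \<in> V0 - K. pK K v < u \<and> u \<le> v} > 0" by (auto simp: card_gt_0_iff)
  then show ?thesis using a by (simp add: hh_def)
qed

lemma hh_bound: "finite V0 \<Longrightarrow> \<forall>k\<in>K. k < M \<Longrightarrow> 0 < M \<Longrightarrow> hh K V0 v < M + card V0"
proof -
  assume a: "finite V0" "\<forall>k\<in>K. k < M" "0 < M"
  show ?thesis
  proof (cases "v \<in> K")
    case True then show ?thesis using a by (simp add: hh_def) (meson trans_less_add1)
  next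
    case False
    have "pK K v < M" using pK_in[of v] a by auto
    moreover have "card {u \<in> V0 - K. pK K v < u \<and> u \<le> v} \<le> card V0"
      using a by (intro card_mono) auto
    ultimately show ?thesis using False by (simp add: hh_def)
  qed
qed

lemma hh_pos: "0 < v \<Longrightarrow> finite V0 \<Longrightarrow> v \<in> V0 \<Longrightarrow> 0 < hh K V0 v"
  using hh_gt[of V0 v] by (cases "v \<in> K") (auto simp: hh_def)

lemma hh_fix: "k \<in> K \<Longrightarrow> hh K V0 k = k" by (simp add: hh_def)

lemma hh_mono:
  assumes fV: "finite V0" and pos: "\<forall>v\<in>V0. 0 < v" and uv: "u \<in> V0" "v \<in> V0" "u < v"
  shows "hh K V0 u < hh K V0 v"
proof (cases "u \<in> K")
  case uK: True
  show ?thesis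
  proof (cases "v \<in> K")
    case True then show ?thesis using uK uv by (simp add: hh_def)
  next
    case False
    have "u \<le> pK K v" using pK_ge uK uv by auto
    then show ?thesis using hh_gt[OF fV uv(2) False] pos uv uK by (simp add: hh_def)
  qed
next
  case uK: False
  show ?thesis
  proof (cases "v \<in> K")
    case True
    have "hh K V0 u \<le> u" using hh_le[OF uK] pos uv by auto
    then show ?thesis using True uv by (simp add: hh_def)
  next
    case vK: False
    have m: "pK K u \<le> pK K v" using pK_mono uv by auto
    show ?thesis
    proof (cases "pK K u = pK K v")
      case True
      let ?Su = "{w \<in> V0 - K. pK K u < w \<and> w \<le> u}"
      let ?Sv = "{w \<in> V0 - K. pK K v < w \<and> w \<le> v}"
      have "?Su \<subseteq> ?Sv" using True uv by auto
      moreover have "v \<in> ?Sv" "v \<notin> ?Su" using uv vK pK_less[of v] pos by auto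
      ultimately have "?Su \<subset> ?Sv" by blast
      then have "card ?Su < card ?Sv" using fV by (intro psubset_card_mono) auto
      then show ?thesis using uK vK True by (simp add: hh_def)
    next
      case False
      then have lt: "pK K u < pK K v" using m by simp
      then have pKv: "pK K v \<in> K" using pK_in[of v] by auto
      have "pK K v < v" using pK_less pos uv by auto
      have "u < pK K v"
      proof (rule ccontr)
        assume "\<not> u < pK K v"
        then have "pK K v < u" using pKv uK by (cases "pK K v = u") auto
        then have "pK K v \<le> pK K u" using pK_ge pKv by auto
        then show False using lt by simp
      qed
      moreover have "hh K V0 u \<le> u" using hh_le[OF uK] pos uv by auto
      moreover have "pK K v < hh K V0 v" using hh_gt[OF fV uv(2) vK] pos uv by auto
      ultimately show ?thesis by simp
    qed
  qed
qed

lemma hh_le_iff: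
  assumes fV: "finite V0" and pos: "\<forall>v\<in>V0. 0 < v" and uv: "u \<in> V0" "v \<in> V0"
  shows "hh K V0 u \<le> hh K V0 v \<longleftrightarrow> u \<le> v"
  using hh_mono[OF fV pos uv] hh_mono[OF fV pos uv(2) uv(1)]
  by (metis linorder_neq_iff order_less_imp_le not_le order_refl)

lemma hh_inj:
  assumes fV: "finite V0" and pos: "\<forall>v\<in>V0. 0 < v"
  shows "inj_on (hh K V0) V0"
  unfolding inj_on_def using hh_le_iff[OF fV pos] by (metis order_antisym order_refl)

end

declare bitlen.simps[simp del]

fun trm_cl :: "trm \<Rightarrow> nat list" where
  "trm_cl (Var x) = []"
| "trm_cl (Const c) = [c]"

fun atom_cl :: "'p atom \<Rightarrow> nat list" where
  "atom_cl (Base p ts) = concat (map trm_cl ts)"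
| "atom_cl (Eq s t) = trm_cl s @ trm_cl t"
| "atom_cl (Leq s t) = trm_cl s @ trm_cl t"

definition constr_cl :: "'p constr \<Rightarrow> nat list" where
  "constr_cl c = concat (map atom_cl (body c @ head c))"

definition eta_cl :: "'p constr list \<Rightarrow> nat list" where
  "eta_cl \<eta> = concat (map constr_cl \<eta>)"

fun atom_trms :: "'p atom \<Rightarrow> trm set" where
  "atom_trms (Base p ts) = set ts"
| "atom_trms (Eq s t) = {s, t}"
| "atom_trms (Leq s t) = {s, t}"

lemma trm_cl_size: "sum_list (map bitlen (trm_cl t)) \<le> (case t of Var x \<Rightarrow> 1 | Const k \<Rightarrow> bitlen k)"
  by (cases t) auto

lemma sum_list_map_concat: "sum_list (map f (concat xss)) = sum_list (map (\<lambda>xs. sum_list (map f xs)) xss)"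
  by (induction xss) auto

lemma atom_cl_size: "sum_list (map bitlen (atom_cl a)) \<le> 1 + (case a of
        Base p ts \<Rightarrow> (\<Sum>t\<leftarrow>ts. (case t of Var x \<Rightarrow> 1 | Const k \<Rightarrow> bitlen k))
      | Eq s t \<Rightarrow> (case s of Var x \<Rightarrow> 1 | Const k \<Rightarrow> bitlen k) + (case t of Var x \<Rightarrow> 1 | Const k \<Rightarrow> bitlen k)
      | Leq s t \<Rightarrow> (case s of Var x \<Rightarrow> 1 | Const k \<Rightarrow> bitlen k) + (case t of Var x \<Rightarrow> 1 | Const k \<Rightarrow> bitlen k))"
proof (cases a)
  case (Base p ts)
  have "sum_list (map bitlen (atom_cl (Base p ts))) = (\<Sum>t\<leftarrow>ts. sum_list (map bitlen (trm_cl t)))"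
    by (simp add: sum_list_map_concat o_def)
  also have "\<dots> \<le> (\<Sum>t\<leftarrow>ts. (case t of Var x \<Rightarrow> 1 | Const k \<Rightarrow> bitlen k))"
    by (intro sum_list_mono trm_cl_size)
  finally have c: "sum_list (map bitlen (atom_cl (Base p ts))) \<le> (\<Sum>t\<leftarrow>ts. (case t of Var x \<Rightarrow> 1 | Const k \<Rightarrow> bitlen k))" .
  show ?thesis unfolding Base atom.case by (rule le_trans[OF c le_add2])
next
  case (Eq s t)
  then show ?thesis using trm_cl_size[of s] trm_cl_size[of t] by simp
next
  case (Leq s t)
  then show ?thesis using trm_cl_size[of s] trm_cl_size[of t] by simp
qed

lemma constr_cl_size: "sum_list (map bitlen (constr_cl c)) \<le> constr_size c"
proof -
  have "sum_list (map bitlen (constr_cl c)) = (\<Sum>a\<leftarrow>body c @ head c. sum_list (map bitlen (atom_cl a)))"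
    by (simp add: constr_cl_def sum_list_map_concat o_def del: map_append)
  also have "\<dots> \<le> (\<Sum>a\<leftarrow>body c @ head c. 1 + (case a of
        Base p ts \<Rightarrow> (\<Sum>t\<leftarrow>ts. (case t of Var x \<Rightarrow> 1 | Const k \<Rightarrow> bitlen k))
      | Eq s t \<Rightarrow> (case s of Var x \<Rightarrow> 1 | Const k \<Rightarrow> bitlen k) + (case t of Var x \<Rightarrow> 1 | Const k \<Rightarrow> bitlen k)
      | Leq s t \<Rightarrow> (case s of Var x \<Rightarrow> 1 | Const k \<Rightarrow> bitlen k) + (case t of Var x \<Rightarrow> 1 | Const k \<Rightarrow> bitlen k)))"
    by (intro sum_list_mono atom_cl_size)
  also have "\<dots> \<le> constr_size c" unfolding constr_size_def by simp
  finally show ?thesis .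
qed

lemma eta_cl_size: "sum_list (map bitlen (eta_cl \<eta>)) \<le> constrs_size \<eta>"
proof -
  have "sum_list (map bitlen (eta_cl \<eta>)) = (\<Sum>c\<leftarrow>\<eta>. sum_list (map bitlen (constr_cl c)))"
    by (simp add: eta_cl_def sum_list_map_concat o_def)
  also have "\<dots> \<le> (\<Sum>c\<leftarrow>\<eta>. constr_size c)" by (intro sum_list_mono constr_cl_size)
  finally show ?thesis by (simp add: constrs_size_def)
qed

lemma length_le_bitlen: "length xs \<le> sum_list (map bitlen xs)"
proof (induction xs)
  case (Cons a xs) then show ?case using bitlen_ge1[of a] by simp
qed simp

lemma mem_bitlen: "x \<in> set xs \<Longrightarrow> bitlen x \<le> sum_list (map bitlen xs)"
  by (rule member_le_sum_list) auto

lemma card_set_bitlen: "card (set xs) \<le> sum_list (map bitlen xs)"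
  using card_length[of xs] length_le_bitlen[of xs] by linarith

lemma card_vals: "finite S \<Longrightarrow> card (vals S) \<le> facts_size S"
proof -
  assume fS: "finite S"
  have "card (vals S) \<le> (\<Sum>f\<in>S. card (set (snd f)))" unfolding vals_def using fS by (rule card_UN_le)
  also have "\<dots> \<le> (\<Sum>f\<in>S. fact_size f)"
    by (intro sum_mono) (use card_set_bitlen in \<open>auto simp: fact_size_def intro: le_SucI\<close>)
  finally show ?thesis by (simp add: facts_size_def)
qed

lemma bitlen_vals: "finite S \<Longrightarrow> v \<in> vals S \<Longrightarrow> bitlen v \<le> facts_size S"
proof -
  assume fS: "finite S" and v: "v \<in> vals S"
  then obtain f where f: "f \<in> S" "v \<in> set (snd f)" by (auto simp: vals_def)
  have "bitlen v \<le> fact_size f" using mem_bitlen[OF f(2)] by (simp add: fact_size_def)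
  also have "\<dots> \<le> facts_size S" unfolding facts_size_def using fS f(1) by (intro member_le_sum) auto
  finally show ?thesis .
qed

lemma finite_vals: "finite S \<Longrightarrow> finite (vals S)" by (auto simp: vals_def)

lemma atom_pull:
  assumes inj: "inj_on h V0" and mono: "\<forall>u\<in>V0. \<forall>v\<in>V0. h u \<le> h v \<longleftrightarrow> u \<le> v"
    and W': "\<forall>f\<in>W'. set (snd f) \<subseteq> V0"
    and tr: "\<forall>t\<in>atom_trms a. trm_eval \<tau>' t \<in> V0 \<and> h (trm_eval \<tau>' t) = trm_eval \<tau> t"
    and hold: "atom_holds (mapf h ` W') \<tau> a"
  shows "atom_holds W' \<tau>' a"
proof (cases a)
  case (Base p ts)
  then obtain f where f: "f \<in> W'" "(p, map (trm_eval \<tau>) ts) = mapf h f" using hold by auto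
  have e: "map (trm_eval \<tau>) ts = map h (map (trm_eval \<tau>') ts)" using tr Base by auto
  have "map h (snd f) = map h (map (trm_eval \<tau>') ts)" using f(2) e by (simp add: mapf_def)
  moreover have "set (snd f) \<union> set (map (trm_eval \<tau>') ts) \<subseteq> V0" using W' f(1) tr Base by auto
  ultimately have "snd f = map (trm_eval \<tau>') ts" using inj by (metis map_inj_on inj_on_subset)
  moreover have "fst f = p" using f(2) by (simp add: mapf_def)
  ultimately have "f = (p, map (trm_eval \<tau>') ts)" by (simp add: prod_eq_iff)
  then show ?thesis using f(1) Base by simp
next
  case (Eq s t)
  have a: "h (trm_eval \<tau>' s) = trm_eval \<tau> s" "h (trm_eval \<tau>' t) = trm_eval \<tau> t"
    "trm_eval \<tau>' s \<in> V0" "trm_eval \<tau>' t \<in> V0" using tr Eq by auto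
  have "trm_eval \<tau> s = trm_eval \<tau> t" using hold Eq by simp
  then have "trm_eval \<tau>' s = trm_eval \<tau>' t" using a inj by (metis inj_onD)
  then show ?thesis using Eq by simp
next
  case (Leq s t)
  have a: "h (trm_eval \<tau>' s) = trm_eval \<tau> s" "h (trm_eval \<tau>' t) = trm_eval \<tau> t"
    "trm_eval \<tau>' s \<in> V0" "trm_eval \<tau>' t \<in> V0" using tr Leq by auto
  then show ?thesis using hold Leq mono by (metis atom_holds.simps(3))
qed

lemma atom_push:
  assumes mono: "\<forall>u\<in>V0. \<forall>v\<in>V0. h u \<le> h v \<longleftrightarrow> u \<le> v"
    and tr: "\<forall>t\<in>atom_trms a. trm_eval \<tau>' t \<in> V0 \<and> h (trm_eval \<tau>' t) = trm_eval \<tau> t"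
    and hold: "atom_holds W \<tau>' a"
  shows "atom_holds (mapf h ` {f\<in>W. set (snd f) \<subseteq> V0}) \<tau> a"
proof (cases a)
  case (Base p ts)
  have e: "map (trm_eval \<tau>) ts = map h (map (trm_eval \<tau>') ts)" using tr Base by auto
  have "(p, map (trm_eval \<tau>') ts) \<in> {f\<in>W. set (snd f) \<subseteq> V0}" using hold tr Base by auto
  then have m: "mapf h (p, map (trm_eval \<tau>') ts) \<in> mapf h ` {f\<in>W. set (snd f) \<subseteq> V0}" by blast
  have "mapf h (p, map (trm_eval \<tau>') ts) = (p, map (trm_eval \<tau>) ts)" using e by (simp add: mapf_def)
  then have "(p, map (trm_eval \<tau>) ts) \<in> mapf h ` {f\<in>W. set (snd f) \<subseteq> V0}" using m by metis
  then show ?thesis unfolding Base atom_holds.simps .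
next
  case (Eq s t)
  have a: "h (trm_eval \<tau>' s) = trm_eval \<tau> s" "h (trm_eval \<tau>' t) = trm_eval \<tau> t"
    using tr Eq by auto
  then show ?thesis using hold Eq by (metis atom_holds.simps(2))
next
  case (Leq s t)
  have a: "h (trm_eval \<tau>' s) = trm_eval \<tau> s" "h (trm_eval \<tau>' t) = trm_eval \<tau> t"
    "trm_eval \<tau>' s \<in> V0" "trm_eval \<tau>' t \<in> V0" using tr Leq by auto
  then show ?thesis using hold Leq mono by (metis atom_holds.simps(3))
qed



definition FS :: "('p \<Rightarrow> nat) \<Rightarrow> nat set \<Rightarrow> 'p fact set" where
  "FS ar S = {f. set (snd f) \<subseteq> S \<and> length (snd f) = ar (fst f)}"

lemma FS_eq: "FS ar S = (\<Union>p. Pair p ` {xs. set xs \<subseteq> S \<and> length xs = ar p})"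
  unfolding FS_def by (auto simp: image_iff)

lemma FS_finite: "finite (UNIV :: 'p set) \<Longrightarrow> finite S \<Longrightarrow> finite (FS (ar :: 'p \<Rightarrow> nat) S)"
  unfolding FS_eq by (intro finite_UN_I) (auto intro: finite_lists_length_eq)

lemma FS_card:
  fixes ar :: "'p::finite \<Rightarrow> nat"
  assumes "finite S" "card S \<le> M" "\<forall>p. ar p \<le> A"
  shows "card (FS ar S) \<le> card (UNIV :: 'p set) * (M + 1) ^ A"
proof -
  have "card (FS ar S) \<le> (\<Sum>p\<in>UNIV. card (Pair p ` {xs. set xs \<subseteq> S \<and> length xs = ar p}))"
    unfolding FS_eq by (rule card_UN_le) simp
  also have "\<dots> \<le> (\<Sum>p\<in>(UNIV::'p set). (M + 1) ^ A)"
  proof (intro sum_mono)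
    fix p :: 'p
    have "card (Pair p ` {xs. set xs \<subseteq> S \<and> length xs = ar p}) \<le> card {xs. set xs \<subseteq> S \<and> length xs = ar p}"
      by (rule card_image_le) (use assms in \<open>auto intro: finite_lists_length_eq\<close>)
    also have "\<dots> = card S ^ ar p" using assms by (simp add: card_lists_length_eq)
    also have "\<dots> \<le> (M + 1) ^ ar p" using assms by (intro power_mono) auto
    also have "\<dots> \<le> (M + 1) ^ A" using assms by (intro power_increasing) auto
    finally show "card (Pair p ` {xs. set xs \<subseteq> S \<and> length xs = ar p}) \<le> (M + 1) ^ A" .
  qed
  finally show ?thesis by simp
qed

lemma sum_list_le_const: "\<forall>x\<in>set xs. f x \<le> (c::nat) \<Longrightarrow> sum_list (map f xs) \<le> length xs * c"
  by (induction xs) (auto intro: add_mono)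

lemma atom_holds_mono: "atom_holds S \<tau> a \<Longrightarrow> S \<subseteq> T \<Longrightarrow> atom_holds T \<tau> a"
  by (cases a) auto

lemma atom_trms_facts:
  "t \<in> atom_trms a \<Longrightarrow> trm_vars t \<subseteq> atom_vars a \<and> set (trm_cl t) \<subseteq> set (atom_cl a) \<and> (atom_wf ar a \<longrightarrow> trm_ok t)"
  by (cases a) auto

lemma atom_cl_eta: "c \<in> set \<eta> \<Longrightarrow> a \<in> set (body c) \<union> set (head c) \<Longrightarrow> set (atom_cl a) \<subseteq> set (eta_cl \<eta>)"
  unfolding eta_cl_def constr_cl_def by auto

lemma var_val:
  assumes cwf: "constr_wf ar c" and x: "x \<in> set (exvars c) \<union> set (allvars c)"
    and hold: "\<forall>a\<in>set (body c). atom_holds V \<tau> a"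
  shows "\<exists>f\<in>V. \<tau> x \<in> set (snd f)"
proof -
  obtain b where b: "b \<in> set (body c)" "is_base b" "x \<in> atom_vars b"
    using cwf x unfolding constr_wf_def by blast
  from b(2) obtain p ts where bb: "b = Base p ts" by (cases b) auto
  then obtain t where t: "t \<in> set ts" "x \<in> trm_vars t" using b by auto
  from t(2) have "t = Var x" by (cases t) auto
  moreover have "(p, map (trm_eval \<tau>) ts) \<in> V" using hold b bb by auto
  ultimately show ?thesis using t by force
qed



lemma small_world:
  fixes ar :: "'p::finite \<Rightarrow> nat"
  assumes wf: "wf_db ar I" and cwf: "\<forall>c\<in>set \<eta>. constr_wf ar c" and W: "possible_world_ic I \<eta> W"
  defines "N \<equiv> db_size I + constrs_size \<eta>"
  defines "A \<equiv> Max (range ar)"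
  shows "\<exists>V. possible_world_ic I \<eta> V \<and> finite V \<and>
           facts_size V \<le> card (UNIV :: 'p set) * (2 * N + 1) ^ A * (1 + A * (N + 2))"
proof -
  obtain D E where I: "I = (D, E)" by (cases I)
  have fD: "finite D" and fE: "finite E" and bD: "\<forall>f\<in>D. base_fact ar f"
    using wf I by (auto simp: wf_db_def)
  have Wdef: "\<forall>f\<in>W. definite_fact f" and Wt: "down D \<subseteq> down W"
    and Wu: "W \<subseteq> down D \<union> (tilde D - up E)" and sat: "\<forall>c\<in>set \<eta>. satisfies W c"
    using W I by (auto simp: possible_world_ic_def possible_world_def I_t_def I_u_def)
  have Wfacts: "\<forall>f\<in>W. f \<in> D \<or> (f \<notin> D \<and> (\<exists>d\<in>D. less_inf d f) \<and> (\<forall>e\<in>E. \<not> less_inf e f))"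
  proof
    fix f assume f: "f \<in> W"
    show "f \<in> D \<or> (f \<notin> D \<and> (\<exists>d\<in>D. less_inf d f) \<and> (\<forall>e\<in>E. \<not> less_inf e f))"
    proof (cases "f \<in> down D")
      case True
      then obtain d where "d \<in> D" "less_inf f d" by (auto simp: down_def)
      then show ?thesis using definite_less_inf Wdef f by blast
    next
      case False
      then have "f \<in> compat_set D" "f \<notin> up E" using Wu f by (auto simp: tilde_def)
      then obtain d where d: "d \<in> D" "compat d f" by (auto simp: compat_set_def)
      have "less_inf d f" using definite_compat[OF _ d(2)] Wdef f by blast
      then have "\<exists>d\<in>D. less_inf d f" using d by blast
      moreover have "\<forall>e\<in>E. \<not> less_inf e f" using \<open>f \<notin> up E\<close> by (auto simp: up_def)
      ultimately have "(\<exists>d\<in>D. less_inf d f) \<and> (\<forall>e\<in>E. \<not> less_inf e f)" by blast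
      moreover have "f \<notin> D"
      proof
        assume "f \<in> D" then have "f \<in> down D" using less_inf_refl[of f] unfolding down_def by blast
        then show False using False by blast
      qed
      ultimately show ?thesis by blast
    qed
  qed
  have Wlen: "\<forall>f\<in>W. length (snd f) = ar (fst f)"
  proof
    fix f assume "f \<in> W"
    then obtain d where "d \<in> D" "less_inf d f" using Wfacts less_inf_refl by blast
    then show "length (snd f) = ar (fst f)" using bD by (auto simp: less_inf_def base_fact_def)
  qed
  have "\<forall>d\<in>D. \<exists>w\<in>W. less_inf d w"
  proof
    fix d assume "d \<in> D"
    then have "d \<in> down D" using less_inf_refl[of d] unfolding down_def by blast
    then show "\<exists>w\<in>W. less_inf d w" using Wt by (auto simp: down_def)
  qed
  then obtain w where w: "\<forall>d\<in>D. w d \<in> W \<and> less_inf d (w d)" by metis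

  define K where "K = (vals D \<union> vals E \<union> set (eta_cl \<eta>)) - {0}"
  have fK: "finite K" unfolding K_def using fD fE by (auto intro: finite_vals)
  have NDE: "facts_size D + facts_size E + constrs_size \<eta> = N"
    unfolding N_def I by (simp add: db_size_def)
  have Kb: "\<forall>k\<in>K. k < 2 ^ N"
  proof
    fix k assume k: "k \<in> K"
    have "bitlen k \<le> N"
    proof -
      consider "k \<in> vals D" | "k \<in> vals E" | "k \<in> set (eta_cl \<eta>)" using k by (auto simp: K_def)
      then show ?thesis
      proof cases
        case 1 then show ?thesis using bitlen_vals[OF fD] NDE by fastforce
      next
        case 2 then show ?thesis using bitlen_vals[OF fE] NDE by fastforce
      next
        case 3 then show ?thesis using mem_bitlen[OF 3] eta_cl_size[of \<eta>] NDE by linarith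
      qed
    qed
    then have "(2::nat) ^ bitlen k \<le> 2 ^ N" by (intro power_increasing) auto
    then show "k < 2 ^ N" using bitlen_less[of k] by linarith
  qed
  have cK: "card K \<le> N"
  proof -
    have "card K \<le> card (vals D \<union> vals E \<union> set (eta_cl \<eta>))"
      unfolding K_def using fD fE by (intro card_mono) (auto intro: finite_vals)
    also have "\<dots> \<le> card (vals D) + card (vals E) + card (set (eta_cl \<eta>))"
      by (meson card_Un_le add_le_mono order_trans order_refl)
    also have "\<dots> \<le> N" using card_vals[OF fD] card_vals[OF fE] card_set_bitlen[of "eta_cl \<eta>"]
        eta_cl_size[of \<eta>] NDE by linarith
    finally show ?thesis .
  qed

  define V0 where "V0 = K \<union> vals (w ` D)"
  have fV0: "finite V0" unfolding V0_def using fK fD by (auto intro: finite_vals)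
  have pos: "\<forall>v\<in>V0. 0 < v"
  proof
    fix v assume "v \<in> V0"
    then consider "v \<in> K" | "v \<in> vals (w ` D)" unfolding V0_def by blast
    then show "0 < v"
    proof cases
      case 1 then show ?thesis by (auto simp: K_def)
    next
      case 2
      then obtain d where "d \<in> D" "v \<in> set (snd (w d))" by (auto simp: vals_def)
      then show ?thesis using w Wdef by (auto simp: definite_fact_def definite_val_def nullv_def)
    qed
  qed
  have cV0: "card V0 \<le> 2 * N"
  proof -
    have "card (vals (w ` D)) \<le> (\<Sum>d\<in>D. card (set (snd (w d))))"
      unfolding vals_def using fD by (simp add: card_UN_le)
    also have "\<dots> \<le> (\<Sum>d\<in>D. fact_size d)"
    proof (intro sum_mono)
      fix d assume d: "d \<in> D"
      have "card (set (snd (w d))) \<le> length (snd (w d))" by (rule card_length)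
      also have "\<dots> = length (snd d)" using w d by (auto simp: less_inf_def)
      also have "\<dots> \<le> fact_size d" using length_le_bitlen[of "snd d"] by (simp add: fact_size_def)
      finally show "card (set (snd (w d))) \<le> fact_size d" .
    qed
    finally have "card (vals (w ` D)) \<le> N" using NDE by (simp add: facts_size_def)
    then show ?thesis unfolding V0_def using cK card_Un_le[of K "vals (w ` D)"] by linarith
  qed

  define h where "h = hh K V0"
  have inj: "inj_on h V0" unfolding h_def using hh_inj[OF fK fV0 pos] .
  have mono: "\<forall>u\<in>V0. \<forall>v\<in>V0. h u \<le> h v \<longleftrightarrow> u \<le> v" unfolding h_def using hh_le_iff[OF fK fV0 pos] by blast
  have hfix: "\<forall>k\<in>K. h k = k" unfolding h_def using hh_fix[OF fK] by blast
  have hpos: "\<forall>v\<in>V0. 0 < h v" unfolding h_def using hh_pos[OF fK] fV0 pos by blast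
  have KV0: "K \<subseteq> V0" unfolding V0_def by blast
  have hb: "\<forall>v. h v < 2 ^ (N + 2)"
  proof
    fix v
    have "h v < 2 ^ N + card V0" unfolding h_def by (rule hh_bound[OF fK fV0 Kb]) simp
    moreover have "2 * N + 1 \<le> (2::nat) ^ (N + 1)" by (rule two_n)
    ultimately show "h v < 2 ^ (N + 2)" using cV0 by simp
  qed

  define W' where "W' = {f\<in>W. set (snd f) \<subseteq> V0}"
  define V where "V = mapf h ` W'"
  have W'W: "W' \<subseteq> W" unfolding W'_def by blast
  have W'FS: "W' \<subseteq> FS ar V0" unfolding W'_def FS_def using Wlen by auto
  have VFS: "V \<subseteq> FS ar (h ` V0)"
  proof
    fix g assume "g \<in> V" then obtain f where f: "f \<in> W'" "g = mapf h f" unfolding V_def by blast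
    then have "set (snd f) \<subseteq> V0" "length (snd f) = ar (fst f)" using W'FS by (auto simp: FS_def)
    then show "g \<in> FS ar (h ` V0)" using f by (auto simp: FS_def mapf_def)
  qed
  have fV: "finite V" using VFS FS_finite[of "h ` V0" ar] fV0 by (auto intro: finite_subset)
  have Vvals: "\<forall>f\<in>V. \<forall>v\<in>set (snd f). v < 2 ^ (N + 2) \<and> v \<in> h ` V0"
  proof (intro ballI conjI)
    fix f v assume "f \<in> V" "v \<in> set (snd f)"
    then show "v \<in> h ` V0" using VFS by (auto simp: FS_def)
    then show "v < 2 ^ (N + 2)" using hb by auto
  qed

  have Vdef: "\<forall>f\<in>V. definite_fact f"
    using hpos unfolding V_def W'_def by (auto simp: mapf_def definite_fact_def definite_val_def nullv_def)
  have fixD: "\<forall>d\<in>D. \<forall>v\<in>set (snd d). v \<noteq> 0 \<longrightarrow> h v = v"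
    using hfix unfolding K_def vals_def by blast
  have Kin: "\<forall>d\<in>D \<union> E. \<forall>v\<in>set (snd d). v \<noteq> 0 \<longrightarrow> v \<in> K"
    unfolding K_def vals_def by blast
  have t1: "down D \<subseteq> down V"
  proof
    fix a assume "a \<in> down D"
    then obtain d where d: "d \<in> D" "less_inf a d" by (auto simp: down_def)
    have "w d \<in> W'" using w d unfolding W'_def V0_def vals_def by auto
    moreover have "less_inf d (mapf h (w d))" using less_inf_mapf w d fixD by blast
    ultimately show "a \<in> down V" using d less_inf_trans unfolding V_def down_def by blast
  qed
  have t2: "V \<subseteq> down D \<union> (tilde D - up E)"
  proof
    fix g assume "g \<in> V"
    then obtain f where f: "f \<in> W'" "g = mapf h f" unfolding V_def by blast
    have fW: "f \<in> W" and fV0: "set (snd f) \<subseteq> V0" using f W'_def by auto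
    have gdef: "definite_fact g" using Vdef \<open>g \<in> V\<close> by blast
    show "g \<in> down D \<union> (tilde D - up E)"
    proof (cases "f \<in> D")
      case True
      have "\<forall>v\<in>set (snd f). h v = v"
        using fixD True Wdef fW by (auto simp: definite_fact_def definite_val_def nullv_def)
      then have "g = f" using f by (simp add: mapf_def map_idI)
      then have "g \<in> down D" using True less_inf_refl[of f] unfolding down_def by blast
      then show ?thesis by blast
    next
      case False
      then obtain d where d: "d \<in> D" "less_inf d f" and nE: "\<forall>e\<in>E. \<not> less_inf e f"
        using Wfacts fW by blast
      have "less_inf d g" using less_inf_mapf d fixD f by blast
      then have "g \<in> compat_set D" using d less_inf_refl[of g] unfolding compat_set_def compat_def by blast
      moreover have "g \<notin> down D"
      proof
        assume "g \<in> down D"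
        then obtain d' where d': "d' \<in> D" "less_inf g d'" by (auto simp: down_def)
        then have "g = d'" using definite_less_inf gdef by blast
        have "less_inf d' (mapf h f)" using \<open>g = d'\<close> f less_inf_refl[of d'] by simp
        moreover have "\<forall>v\<in>set (snd d'). v \<noteq> 0 \<longrightarrow> v \<in> K" using Kin d' by blast
        ultimately have "less_inf d' f" using less_inf_mapf_rev[of d' h f K V0] hfix KV0 fV0 inj by blast
        then have "d' = f" using definite_less_inf \<open>g = d'\<close> gdef Wdef fW by metis
        then show False using False d' by blast
      qed
      moreover have "g \<notin> up E"
      proof
        assume "g \<in> up E"
        then obtain e where e: "e \<in> E" "less_inf e g" by (auto simp: up_def)
        moreover have "\<forall>v\<in>set (snd e). v \<noteq> 0 \<longrightarrow> v \<in> K" using Kin e by blast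
        ultimately have "less_inf e f" using less_inf_mapf_rev[of e h f K V0] hfix KV0 fV0 inj f by blast
        then show False using nE e by blast
      qed
      ultimately show ?thesis by (auto simp: tilde_def)
    qed
  qed
  have csat: "\<forall>c\<in>set \<eta>. satisfies V c"
  proof
    fix c assume c: "c \<in> set \<eta>"
    have cw: "constr_wf ar c" using cwf c by blast
    obtain \<sigma>W where \<sigma>W: "\<forall>\<tau>. (\<forall>y\<in>set (allvars c). definite_val (\<tau> y)) \<and>
             (\<forall>x. x \<notin> set (allvars c) \<longrightarrow> \<tau> x = \<sigma>W x) \<longrightarrow>
             (\<forall>a\<in>set (body c). atom_holds W \<tau> a) \<longrightarrow> (\<exists>b\<in>set (head c). atom_holds W \<tau> b)"
      using sat c unfolding satisfies_def by blast
    define B :: nat where "B = 2 ^ (N + 2)"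
    show "satisfies V c" unfolding satisfies_def
    proof (intro exI[of _ "\<lambda>_. B"] conjI ballI allI impI)
      show "\<And>x. definite_val B" by (simp add: B_def definite_val_def nullv_def)
      fix \<tau> assume \<tau>: "(\<forall>y\<in>set (allvars c). definite_val (\<tau> y)) \<and> (\<forall>x. x \<notin> set (allvars c) \<longrightarrow> \<tau> x = B)"
        and hold: "\<forall>a\<in>set (body c). atom_holds V \<tau> a"
      have allv: "\<forall>a\<in>set (body c) \<union> set (head c). atom_vars a \<subseteq> set (allvars c)"
      proof (intro ballI subsetI)
        fix a x assume a: "a \<in> set (body c) \<union> set (head c)" and x: "x \<in> atom_vars a"
        have xs: "x \<in> set (exvars c) \<union> set (allvars c)" using cw a x unfolding constr_wf_def by blast
        obtain f where "f \<in> V" "\<tau> x \<in> set (snd f)" using var_val[OF cw xs hold] by blast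
        then have "\<tau> x < B" using Vvals B_def by blast
        show "x \<in> set (allvars c)"
        proof (rule ccontr)
          assume "x \<notin> set (allvars c)" then have "\<tau> x = B" using \<tau> by blast
          then show False using \<open>\<tau> x < B\<close> by simp
        qed
      qed
      have inh: "\<forall>y\<in>set (allvars c). \<tau> y \<in> h ` V0"
      proof
        fix y assume y: "y \<in> set (allvars c)"
        obtain f where "f \<in> V" "\<tau> y \<in> set (snd f)" using var_val[OF cw _ hold] y by blast
        then show "\<tau> y \<in> h ` V0" using Vvals by blast
      qed
      define \<tau>' where "\<tau>' = (\<lambda>y. if y \<in> set (allvars c) then inv_into V0 h (\<tau> y) else \<sigma>W y)"
      have \<tau>'v: "\<forall>y\<in>set (allvars c). \<tau>' y \<in> V0 \<and> h (\<tau>' y) = \<tau> y"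
        using inh unfolding \<tau>'_def by (auto intro: inv_into_into f_inv_into_f)
      have tr: "\<forall>a\<in>set (body c) \<union> set (head c). \<forall>t\<in>atom_trms a.
                  trm_eval \<tau>' t \<in> V0 \<and> h (trm_eval \<tau>' t) = trm_eval \<tau> t"
      proof (intro ballI)
        fix a t assume a: "a \<in> set (body c) \<union> set (head c)" and t: "t \<in> atom_trms a"
        have af: "trm_vars t \<subseteq> atom_vars a \<and> set (trm_cl t) \<subseteq> set (atom_cl a) \<and> (atom_wf ar a \<longrightarrow> trm_ok t)"
          by (rule atom_trms_facts[OF t])
        have awf: "atom_wf ar a" using cw a unfolding constr_wf_def by blast
        show "trm_eval \<tau>' t \<in> V0 \<and> h (trm_eval \<tau>' t) = trm_eval \<tau> t"
        proof (cases t)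
          case (Var y)
          then have "y \<in> set (allvars c)" using af allv a by auto
          then show ?thesis using \<tau>'v Var by simp
        next
          case (Const k)
          then have "k \<in> set (eta_cl \<eta>)" using af atom_cl_eta[OF c a] by auto
          moreover have "k \<noteq> 0" using af awf Const by (simp add: definite_val_def nullv_def)
          ultimately have "k \<in> K" unfolding K_def by blast
          then show ?thesis using Const hfix KV0 by auto
        qed
      qed
      have bodyW: "\<forall>a\<in>set (body c). atom_holds W \<tau>' a"
      proof
        fix a assume a: "a \<in> set (body c)"
        have W'v: "\<forall>f\<in>W'. set (snd f) \<subseteq> V0" unfolding W'_def by blast
        have trA: "\<forall>t\<in>atom_trms a. trm_eval \<tau>' t \<in> V0 \<and> h (trm_eval \<tau>' t) = trm_eval \<tau> t"
          using tr a by blast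
        have "atom_holds (mapf h ` W') \<tau> a" using hold a unfolding V_def by blast
        then have "atom_holds W' \<tau>' a" by (rule atom_pull[OF inj mono W'v trA])
        then show "atom_holds W \<tau>' a" using atom_holds_mono W'W by blast
      qed
      have pre: "(\<forall>y\<in>set (allvars c). definite_val (\<tau>' y)) \<and> (\<forall>x. x \<notin> set (allvars c) \<longrightarrow> \<tau>' x = \<sigma>W x)"
        using \<tau>'v pos unfolding \<tau>'_def by (auto simp: definite_val_def nullv_def)
      obtain b where b: "b \<in> set (head c)" "atom_holds W \<tau>' b" using \<sigma>W pre bodyW by blast
      have trB: "\<forall>t\<in>atom_trms b. trm_eval \<tau>' t \<in> V0 \<and> h (trm_eval \<tau>' t) = trm_eval \<tau> t"
        using tr b(1) by blast
      have "atom_holds V \<tau> b" unfolding V_def W'_def by (rule atom_push[OF mono trB b(2)])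
      then show "\<exists>b\<in>set (head c). atom_holds V \<tau> b" using b(1) by blast
    qed
  qed
  have pw: "possible_world_ic I \<eta> V"
    using Vdef t1 t2 csat I by (auto simp: possible_world_ic_def possible_world_def I_t_def I_u_def)

  have arA: "\<forall>p. ar p \<le> A" unfolding A_def by (auto intro: Max_ge)
  have cV: "card V \<le> card (UNIV :: 'p set) * (2 * N + 1) ^ A"
  proof -
    have "card V \<le> card (FS ar (h ` V0))" using VFS FS_finite[of "h ` V0" ar] fV0 by (auto intro: card_mono)
    also have "\<dots> \<le> card (UNIV :: 'p set) * (2 * N + 1) ^ A"
      using FS_card[of "h ` V0" "2 * N" ar A] fV0 cV0 card_image_le[OF fV0, of h] arA by auto
    finally show ?thesis .
  qed
  have fsz: "\<forall>f\<in>V. fact_size f \<le> 1 + A * (N + 2)"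
  proof
    fix f assume f: "f \<in> V"
    have "\<forall>v\<in>set (snd f). bitlen v \<le> N + 2" using Vvals f bitlen_bound by auto
    then have "sum_list (map bitlen (snd f)) \<le> length (snd f) * (N + 2)" by (rule sum_list_le_const)
    also have "\<dots> \<le> A * (N + 2)"
    proof (rule mult_le_mono1)
      have "length (snd f) = ar (fst f)" using f VFS by (auto simp: FS_def)
      then show "length (snd f) \<le> A" using arA by simp
    qed
    finally show "fact_size f \<le> 1 + A * (N + 2)" by (simp add: fact_size_def)
  qed
  have "facts_size V \<le> (\<Sum>f\<in>V. 1 + A * (N + 2))" unfolding facts_size_def using fsz by (intro sum_mono) auto
  also have "\<dots> = card V * (1 + A * (N + 2))" by simp
  also have "\<dots> \<le> card (UNIV :: 'p set) * (2 * N + 1) ^ A * (1 + A * (N + 2))" using cV by (rule mult_le_mono1)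
  finally show ?thesis using pw fV by blast
qed


theorem proposition6:
  fixes ar :: "'p::finite \<Rightarrow> nat"
  shows "\<exists>pol :: real poly. \<forall>(I :: 'p db) (\<eta> :: 'p constr list).
           wf_db ar I \<and> (\<forall>c\<in>set \<eta>. constr_wf ar c) \<and> consistent I \<eta> \<longrightarrow>
           (\<exists>V. possible_world_ic I \<eta> V \<and> finite V \<and>
                real (facts_size V) \<le> poly pol (real (db_size I + constrs_size \<eta>)))"
proof -
  define A where "A = Max (range ar)"
  define C where "C = card (UNIV :: 'p set)"
  define pol :: "real poly" where "pol = smult (real C) ([:1, 2:] ^ A * [:1 + 2 * real A, real A:])"
  have pe: "poly pol x = real C * (1 + 2 * x) ^ A * (1 + 2 * real A + real A * x)" for x
    unfolding pol_def by (simp add: algebra_simps)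
  show ?thesis
  proof (intro exI[of _ pol] allI impI)
    fix I :: "'p db" and \<eta> :: "'p constr list"
    assume a: "wf_db ar I \<and> (\<forall>c\<in>set \<eta>. constr_wf ar c) \<and> consistent I \<eta>"
    then obtain W where W: "possible_world_ic I \<eta> W" by (auto simp: consistent_def)
    define N where "N = db_size I + constrs_size \<eta>"
    obtain V where V: "possible_world_ic I \<eta> V" "finite V"
      "facts_size V \<le> C * (2 * N + 1) ^ A * (1 + A * (N + 2))"
      using small_world[of ar I \<eta> W] a W unfolding N_def A_def C_def by blast
    have "real (facts_size V) \<le> real (C * (2 * N + 1) ^ A * (1 + A * (N + 2)))"
      using V(3) by (rule of_nat_mono)
    also have "\<dots> = poly pol (real N)" unfolding pe by (simp add: algebra_simps)
    finally show "\<exists>V. possible_world_ic I \<eta> V \<and> finite V \<and>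
                real (facts_size V) \<le> poly pol (real (db_size I + constrs_size \<eta>))"
      using V N_def by blast
  qed
qed

end
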